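(* In the setting below, for every bounded continuous test function $\alpha:\mathbb{R}^d\times\mathbb{R}^s\to\mathbb{R}$, as $n\to\infty$, \[ \iint\alpha(x,y)\,q(y,y')\frac{y-y'}{1+\|y-y'\|^2}\,d\mu_n(x,y)\,d\mu_n(x',y')=\iint\alpha(x,y)\,q(y,y')\frac{y-y'}{1+\|y-y'\|^2}\,d\mu(x,y)\,d\mu(x',y')+o(1). \]
   Context: Setting: $d,s\ge2$, $\rho\in(0,1)$; $\mu_X$ is a Borel probability measure on $\mathbb{R}^d$ which either has compact support and a $C^1$ density or has sub-Gaussian tails; $X_1,X_2,\dots$ are i.i.d. with law $\mu_X$; $Y^*=(Y_1,\dots,Y_n)$ is the t-SNE output (minimizer of $L_{n,\rho}(X,\cdot)$, where for $X_1,\dots,X_n$ one picks $\sigma_i>0$ with $-\sum_{j\neq i}p_{j|i}\log p_{j|i}=\log(n\rho)$, $p_{j|i}=e^{-\|X_i-X_j\|^2/2\sigma_i^2}/\sum_{k\neq i}e^{-\|X_i-X_k\|^2/2\sigma_i^2}$, $p_{ij}=(p_{i|j}+p_{j|i})/(2n)$, $q_{ij}=(1+\|Y_i-Y_j\|^2)^{-1}/\sum_{k\neq\ell}(1+\|Y_k-Y_\ell\|^2)^{-1}$, $L_{n,\rho}=\sum_{i\ne j}p_{ij}\log(p_{ij}/q_{ij})$); $\mu_n=\frac1n\sum_i\delta_{(X_i,Y_i)}$ converges weakly to $\mu$. Here $q(y,y')=(1+\|y-y'\|^2)^{-1}/\iint(1+\|u-u'\|^2)^{-1}d\mu(u)d\mu(u')$,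 the normalization taken with respect to the $\mathbb{R}^s$-marginal of the limit $\mu$. *)

theory Defs
  imports "HOL-Probability.Probability"
begin

definition cond_p :: "(nat \<Rightarrow> real^'d) \<Rightarrow> nat \<Rightarrow> (nat \<Rightarrow> real) \<Rightarrow> nat \<Rightarrow> nat \<Rightarrow> real" where
  "cond_p X n \<sigma> i j =
     exp (- (norm (X i - X j))\<^sup>2 / (2 * (\<sigma> i)\<^sup>2)) /
     (\<Sum>k\<in>{..<n} - {i}. exp (- (norm (X i - X k))\<^sup>2 / (2 * (\<sigma> i)\<^sup>2)))"

definition perplexity_calibrated :: "(nat \<Rightarrow> real^'d) \<Rightarrow> nat \<Rightarrow> real \<Rightarrow> (nat \<Rightarrow> real) \<Rightarrow> bool" where
  "perplexity_calibrated X n \<rho> \<sigma> \<longleftrightarrow>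
     (\<forall>i<n. \<sigma> i > 0 \<and>
        - (\<Sum>j\<in>{..<n} - {i}. cond_p X n \<sigma> i j * ln (cond_p X n \<sigma> i j)) = ln (real n * \<rho>))"

definition joint_p :: "(nat \<Rightarrow> real^'d) \<Rightarrow> nat \<Rightarrow> (nat \<Rightarrow> real) \<Rightarrow> nat \<Rightarrow> nat \<Rightarrow> real" where
  "joint_p X n \<sigma> i j = (cond_p X n \<sigma> j i + cond_p X n \<sigma> i j) / (2 * real n)"

definition low_q :: "(nat \<Rightarrow> real^'s) \<Rightarrow> nat \<Rightarrow> nat \<Rightarrow> nat \<Rightarrow> real" where
  "low_q Y n i j =
     (1 / (1 + (norm (Y i - Y j))\<^sup>2)) /
     (\<Sum>k<n. \<Sum>l\<in>{..<n} - {k}. 1 / (1 + (norm (Y k - Y l))\<^sup>2))"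

definition tsne_loss :: "(nat \<Rightarrow> real^'d) \<Rightarrow> nat \<Rightarrow> (nat \<Rightarrow> real) \<Rightarrow> (nat \<Rightarrow> real^'s) \<Rightarrow> real" where
  "tsne_loss X n \<sigma> Y =
     (\<Sum>i<n. \<Sum>j\<in>{..<n} - {i}. joint_p X n \<sigma> i j * ln (joint_p X n \<sigma> i j / low_q Y n i j))"

definition tsne_output :: "(nat \<Rightarrow> real^'d) \<Rightarrow> nat \<Rightarrow> real \<Rightarrow> (nat \<Rightarrow> real) \<Rightarrow> (nat \<Rightarrow> real^'s) \<Rightarrow> bool" where
  "tsne_output X n \<rho> \<sigma> Y \<longleftrightarrow>
     perplexity_calibrated X n \<rho> \<sigma> \<and> (\<forall>Y' :: nat \<Rightarrow> real^'s. tsne_loss X n \<sigma> Y \<le> tsne_loss X n \<sigma> Y')"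

definition admissible_input_law :: "(real^'d) measure \<Rightarrow> bool" where
  "admissible_input_law \<mu>X \<longleftrightarrow>
     (\<exists>f grad K. (\<forall>x. 0 \<le> f x) \<and> \<mu>X = density lborel (\<lambda>x. ennreal (f x)) \<and>
        (\<forall>x. (f has_derivative (\<lambda>h. grad x \<bullet> h)) (at x)) \<and> continuous_on UNIV grad \<and>
        compact K \<and> (AE x in \<mu>X. x \<in> K))
   \<or> (\<exists>C c. c > 0 \<and> (\<forall>t\<ge>0. measure \<mu>X {x. norm x > t} \<le> C * exp (- c * t\<^sup>2)))"

definition empirical_weak_conv :: "(nat \<Rightarrow> nat \<Rightarrow> 'a::metric_space) \<Rightarrow> 'a measure \<Rightarrow> bool" where
  "empirical_weak_conv Z \<mu> \<longleftrightarrow>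
     (\<forall>f :: 'a \<Rightarrow> real. continuous_on UNIV f \<and> bounded (range f) \<longrightarrow>
        (\<lambda>n. (\<Sum>i<n. f (Z n i)) / real n) \<longlonglongrightarrow> (\<integral>z. f z \<partial>\<mu>))"

definition q_lim :: "((real^'d) \<times> (real^'s)) measure \<Rightarrow> real^'s \<Rightarrow> real^'s \<Rightarrow> real" where
  "q_lim \<mu> y y' =
     (1 / (1 + (norm (y - y'))\<^sup>2)) /
     (\<integral>z. (\<integral>z'. 1 / (1 + (norm (snd z - snd z'))\<^sup>2) \<partial>\<mu>) \<partial>\<mu>)"

definition force_kernel :: "((real^'d) \<times> (real^'s)) measure \<Rightarrow> real^'s \<Rightarrow> real^'s \<Rightarrow> real^'s" where
  "force_kernel \<mu> y y' = (q_lim \<mu> y y' / (1 + (norm (y - y'))\<^sup>2)) *\<^sub>R (y - y')"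

end

theory Submission
  imports Defs
begin

lemma integrable_bc:
  fixes f :: "'a::topological_space \<Rightarrow> 'b::{banach, second_countable_topology}"
  assumes P: "prob_space \<mu>" and S: "sets \<mu> = sets borel"
    and c: "continuous_on UNIV f" and b: "\<And>x. norm (f x) \<le> B"
  shows "integrable \<mu> f"
proof -
  have m: "f \<in> borel_measurable \<mu>"
    using borel_measurable_continuous_onI[OF c] measurable_cong_sets[OF S refl] by blast
  have fm: "finite_measure \<mu>" using P by (simp add: prob_space_def)
  show ?thesis
    by (rule finite_measure.integrable_const_bound[OF fm _ m]) (use b in auto)
qed

lemma weak_vec:
  fixes Z :: "nat \<Rightarrow> nat \<Rightarrow> (real^'d) \<times> (real^'s)"
    and f :: "(real^'d) \<times> (real^'s) \<Rightarrow> real^'k"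
  assumes W: "empirical_weak_conv Z \<mu>" and P: "prob_space \<mu>" and S: "sets \<mu> = sets borel"
    and c: "continuous_on UNIV f" and b: "\<And>x. norm (f x) \<le> B"
  shows "(\<lambda>n. (1 / real n) *\<^sub>R (\<Sum>i<n. f (Z n i))) \<longlonglongrightarrow> (\<integral>z. f z \<partial>\<mu>)"
proof (rule vec_tendstoI)
  fix k
  have ck: "continuous_on UNIV (\<lambda>z. f z $ k)" using c by (rule continuous_on_component)
  have bk: "bounded (range (\<lambda>z. f z $ k))"
    unfolding bounded_iff
  proof (intro exI[of _ B] ballI)
    fix x assume "x \<in> range (\<lambda>z. f z $ k)"
    then obtain z where "x = f z $ k" by auto
    then show "norm x \<le> B" using b[of z] component_le_norm_cart[of "f z" k] by simp
  qed
  have "(\<lambda>n. (\<Sum>i<n. f (Z n i) $ k) / real n) \<longlonglongrightarrow> (\<integral>z. f z $ k \<partial>\<mu>)"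
    using W ck bk unfolding empirical_weak_conv_def by blast
  moreover have "(\<integral>z. f z $ k \<partial>\<mu>) = (\<integral>z. f z \<partial>\<mu>) $ k"
    using integral_bounded_linear[OF bounded_linear_vec_nth integrable_bc[OF P S c b]] .
  moreover have "\<And>n. ((1 / real n) *\<^sub>R (\<Sum>i<n. f (Z n i))) $ k = (\<Sum>i<n. f (Z n i) $ k) / real n"
    by (simp add: sum_component)
  ultimately show "((\<lambda>n. ((1 / real n) *\<^sub>R (\<Sum>i<n. f (Z n i))) $ k) \<longlongrightarrow> (\<integral>z. f z \<partial>\<mu>) $ k) sequentially"
    by simp
qed

lemma uc_vanish:
  fixes h :: "real^'s \<Rightarrow> real^'s"
  assumes ch: "continuous_on UNIV h" and bh: "\<And>v. norm (h v) \<le> C / (1 + norm v)"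
  shows "uniformly_continuous_on UNIV h"
  unfolding uniformly_continuous_on_def
proof (intro allI impI)
  fix e :: real assume e: "e > 0"
  have C0: "C \<ge> 0" using bh[of 0] norm_ge_zero[of "h 0"] by (simp del: norm_ge_zero)
  define R where "R = 2 * C / e"
  have R0: "R \<ge> 0" using C0 e by (simp add: R_def)
  have small: "norm (h v) < e / 2" if "norm v > R" for v
  proof -
    have "e * norm v > 2 * C" using that e by (simp add: R_def field_simps)
    then have "C / (1 + norm v) < e / 2"
      by (simp add: divide_simps add_pos_nonneg) (use e in \<open>simp add: algebra_simps\<close>)
    then show ?thesis using bh[of v] by linarith
  qed
  have "uniformly_continuous_on (cball 0 (R + 1)) h"
    by (rule compact_uniformly_continuous[OF continuous_on_subset[OF ch]]) auto
  then obtain d0 where d0: "d0 > 0"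
    and hd0: "\<And>x x'. x \<in> cball 0 (R+1) \<Longrightarrow> x' \<in> cball 0 (R+1) \<Longrightarrow> dist x' x < d0 \<Longrightarrow> dist (h x') (h x) < e"
    unfolding uniformly_continuous_on_def using e by metis
  show "\<exists>d>0. \<forall>x\<in>UNIV. \<forall>x'\<in>UNIV. dist x' x < d \<longrightarrow> dist (h x') (h x) < e"
  proof (intro exI[of _ "min d0 1"] conjI ballI impI)
    show "min d0 1 > 0" using d0 by simp
    fix x x' :: "real^'s" assume dx: "dist x' x < min d0 1"
    show "dist (h x') (h x) < e"
    proof (cases "norm x \<le> R + 1 \<and> norm x' \<le> R + 1")
      case True then show ?thesis using hd0[of x x'] dx by simp
    next
      case False
      have "\<bar>norm x' - norm x\<bar> \<le> dist x' x" unfolding dist_norm by (rule norm_triangle_ineq3)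
      then have "norm x > R \<and> norm x' > R" using False dx by auto
      then have "norm (h x) < e/2" "norm (h x') < e/2" using small by auto
      then show ?thesis unfolding dist_norm using norm_triangle_ineq4[of "h x'" "h x"] by linarith
    qed
  qed
qed

lemma product_conv:
  fixes Z :: "nat \<Rightarrow> nat \<Rightarrow> (real^'d) \<times> (real^'s)"
    and \<alpha> :: "(real^'d) \<times> (real^'s) \<Rightarrow> real"
    and h :: "real^'s \<Rightarrow> real^'s"
  assumes W: "empirical_weak_conv Z \<mu>" and P: "prob_space \<mu>" and S: "sets \<mu> = sets borel"
    and c\<alpha>: "continuous_on UNIV \<alpha>" and b\<alpha>: "\<And>z. \<bar>\<alpha> z\<bar> \<le> A"
    and uch: "uniformly_continuous_on UNIV h" and bh: "\<And>v. norm (h v) \<le> B"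
  shows "(\<lambda>n. (1 / (real n)\<^sup>2) *\<^sub>R (\<Sum>i<n. \<Sum>j<n. \<alpha> (Z n i) *\<^sub>R h (snd (Z n i) - snd (Z n j))))
     \<longlonglongrightarrow> (\<integral>z. (\<integral>z'. \<alpha> z *\<^sub>R h (snd z - snd z') \<partial>\<mu>) \<partial>\<mu>)"
proof -
  define Hn where "Hn n y = (1 / real n) *\<^sub>R (\<Sum>j<n. h (y - snd (Z n j)))" for n y
  define H where "H y = (\<integral>z'. h (y - snd z') \<partial>\<mu>)" for y
  have A0: "A \<ge> 0" using b\<alpha>[of undefined] by linarith
  have B0: "B \<ge> 0" using bh[of 0] norm_ge_zero[of "h 0"] by (simp del: norm_ge_zero)
  have ch: "continuous_on UNIV h" using uch by (rule uniformly_continuous_imp_continuous)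
  have chy: "continuous_on UNIV (\<lambda>z'::(real^'d) \<times> (real^'s). h (y - snd z'))" for y
    by (intro continuous_on_compose2[OF ch] continuous_intros) auto
  have intg: "integrable \<mu> (\<lambda>z'. h (y - snd z'))" for y
    by (rule integrable_bc[OF P S chy bh])
  have one: "measure \<mu> (space \<mu>) = 1" using P by (simp add: prob_space.prob_space)
  have intc: "(\<integral>z. c \<partial>\<mu>) = c" for c :: real using one by simp
  have icon: "integrable \<mu> (\<lambda>_. c::real)" for c
    using integrable_bc[OF P S, of "\<lambda>_. c" "\<bar>c\<bar>"] by simp
  have Hb: "norm (H y) \<le> B" for y
  proof -
    have "norm (H y) \<le> (\<integral>z. B \<partial>\<mu>)" unfolding H_def
      by (rule Bochner_Integration.integral_norm_bound_integral[OF intg]) (auto simp: bh icon)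
    then show ?thesis using one by simp
  qed
  have Hnb: "norm (Hn n y) \<le> B" for n y
  proof (cases "n = 0")
    case True then show ?thesis using B0 by (simp add: Hn_def)
  next
    case False
    have "norm (\<Sum>j<n. h (y - snd (Z n j))) \<le> (\<Sum>j<n. norm (h (y - snd (Z n j))))" by (rule norm_sum)
    also have "\<dots> \<le> real n * B" using sum_bounded_above[of "{..<n}" "\<lambda>j. norm (h (y - snd (Z n j)))" B] bh by simp
    finally show ?thesis using False by (simp add: Hn_def field_simps)
  qed
  have equi: "\<exists>d>0. \<forall>y y0 v. dist y y0 < d \<longrightarrow> norm (h (y - v) - h (y0 - v)) < e" if e: "e > 0" for e
  proof -
    obtain d where d: "d > 0" and hd: "\<And>x x'. dist x' x < d \<Longrightarrow> dist (h x') (h x) < e"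
      using uch e unfolding uniformly_continuous_on_def by (meson UNIV_I)
    show ?thesis
    proof (intro exI[of _ d] conjI allI impI)
      fix y y0 v :: "real^'s" assume "dist y y0 < d"
      then have "dist (y - v) (y0 - v) < d" by (simp add: dist_norm)
      then show "norm (h (y - v) - h (y0 - v)) < e" using hd by (simp add: dist_norm)
    qed (use d in auto)
  qed
  have Hn_equi: "norm (Hn n y - Hn n y0) \<le> e"
    if "\<forall>v. norm (h (y - v) - h (y0 - v)) < e" "e > 0" for n y y0 e
  proof (cases "n = 0")
    case True then show ?thesis using that by (simp add: Hn_def)
  next
    case False
    have "Hn n y - Hn n y0 = (1 / real n) *\<^sub>R (\<Sum>j<n. h (y - snd (Z n j)) - h (y0 - snd (Z n j)))"
      by (simp add: Hn_def sum_subtractf scaleR_diff_right)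
    moreover have "norm (\<Sum>j<n. h (y - snd (Z n j)) - h (y0 - snd (Z n j))) \<le> (\<Sum>j<n. norm (h (y - snd (Z n j)) - h (y0 - snd (Z n j))))"
      by (rule norm_sum)
    moreover have "(\<Sum>j<n. norm (h (y - snd (Z n j)) - h (y0 - snd (Z n j)))) \<le> real n * e"
      using sum_bounded_above[of "{..<n}" "\<lambda>j. norm (h (y - snd (Z n j)) - h (y0 - snd (Z n j)))" e] that
      by (simp add: less_imp_le)
    ultimately show ?thesis using False by (simp add: field_simps)
  qed
  have H_equi: "norm (H y - H y0) \<le> e"
    if "\<forall>v. norm (h (y - v) - h (y0 - v)) < e" for y y0 e
  proof -
    have "H y - H y0 = (\<integral>z'. h (y - snd z') - h (y0 - snd z') \<partial>\<mu>)"
      unfolding H_def by (rule Bochner_Integration.integral_diff[OF intg intg, symmetric])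
    also have "norm \<dots> \<le> (\<integral>z. e \<partial>\<mu>)"
      by (rule Bochner_Integration.integral_norm_bound_integral) (use intg icon that in \<open>auto intro: less_imp_le\<close>)
    finally show ?thesis using one by simp
  qed
  have Hpt: "(\<lambda>n. Hn n y) \<longlonglongrightarrow> H y" for y
    unfolding Hn_def H_def by (rule weak_vec[OF W P S chy bh])
  have unif: "\<forall>\<^sub>F n in sequentially. \<forall>y\<in>cball 0 R. norm (Hn n y - H y) \<le> e" if e: "e > 0" for R e
  proof -
    obtain d where d: "d > 0" and hd: "\<And>y y0 v. dist y y0 < d \<Longrightarrow> norm (h (y - v) - h (y0 - v)) < e/3"
      using equi[of "e/3"] e by auto
    have "compact (cball (0::real^'s) R)" by simp
    then obtain T where T: "finite T" and cov: "cball (0::real^'s) R \<subseteq> (\<Union>t\<in>T. ball t d)"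
      unfolding compact_eq_totally_bounded using d by metis
    have "\<forall>t\<in>T. \<forall>\<^sub>F n in sequentially. dist (Hn n t) (H t) < e/3"
    proof
      fix t assume "t \<in> T"
      have "e/3 > 0" using e by simp
      then show "\<forall>\<^sub>F n in sequentially. dist (Hn n t) (H t) < e/3"
        using Hpt[of t] unfolding tendsto_iff by blast
    qed
    then have ev: "\<forall>\<^sub>F n in sequentially. \<forall>t\<in>T. dist (Hn n t) (H t) < e/3"
      by (rule eventually_ball_finite[OF T])
    show ?thesis
    proof (rule eventually_mono[OF ev], intro ballI)
      fix n :: nat and y :: "real^'s" assume all: "\<forall>t\<in>T. dist (Hn n t) (H t) < e / 3" and y: "y \<in> cball 0 R"
      then obtain t where t: "t \<in> T" and yt: "dist t y < d" using cov by auto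
      have yt': "dist y t < d" using yt by (simp add: dist_commute)
      have 1: "norm (Hn n y - Hn n t) \<le> e/3" using Hn_equi[of y t "e/3" n] hd[OF yt'] e by auto
      have 2: "norm (Hn n t - H t) < e/3" using all t by (simp add: dist_norm)
      have 3: "norm (H t - H y) \<le> e/3" using H_equi[of t y "e/3"] hd[OF yt] by auto
      have "norm (Hn n y - H y) \<le> norm (Hn n y - Hn n t) + norm (Hn n t - H t) + norm (H t - H y)"
        using norm_triangle_ineq[of "Hn n y - Hn n t" "Hn n t - H t"]
          norm_triangle_ineq[of "Hn n y - Hn n t + (Hn n t - H t)" "H t - H y"] by simp
      then show "norm (Hn n y - H y) \<le> e" using 1 2 3 by linarith
    qed
  qed
  define cut where "cut R z = min 1 (max 0 (norm (snd z) - R))" for R :: real and z :: "(real^'d) \<times> (real^'s)"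
  have ccut: "continuous_on UNIV (cut R)" for R
    unfolding cut_def by (intro continuous_intros)
  have bcut: "norm (cut R z) \<le> 1" for R z by (simp add: cut_def)
  have tight: "\<exists>R\<ge>0. \<forall>\<^sub>F n in sequentially. (\<Sum>i<n. cut R (Z n i)) / real n < e" if e: "e > 0" for e
  proof -
    have mc: "cut R \<in> borel_measurable \<mu>" for R
      using borel_measurable_continuous_onI[OF ccut] measurable_cong_sets[OF S refl] by blast
    have "(\<lambda>m. \<integral>z. cut (real m) z \<partial>\<mu>) \<longlonglongrightarrow> (\<integral>z. 0 \<partial>\<mu>)"
    proof (rule integral_dominated_convergence[where w="\<lambda>_. 1"])
      show "integrable \<mu> (\<lambda>_. 1::real)" using integrable_bc[OF P S, of "\<lambda>_. 1::real" 1] by simp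
      show "AE z in \<mu>. (\<lambda>m. cut (real m) z) \<longlonglongrightarrow> 0"
      proof (rule AE_I2)
        fix z :: "(real^'d) \<times> (real^'s)"
        obtain N where N: "norm (snd z) \<le> real N" using real_arch_simple by blast
        have "\<forall>\<^sub>F m in sequentially. cut (real m) z = 0"
          unfolding eventually_sequentially
          by (rule exI[of _ N]) (use N in \<open>auto simp: cut_def\<close>)
        then show "(\<lambda>m. cut (real m) z) \<longlonglongrightarrow> 0" by (rule tendsto_eventually)
      qed
    qed (use mc bcut in auto)
    then have lim0: "(\<lambda>m. \<integral>z. cut (real m) z \<partial>\<mu>) \<longlonglongrightarrow> 0" by simp
    have half: "e/2 > 0" using e by simp
    have "\<forall>\<^sub>F m in sequentially. dist (\<integral>z. cut (real m) z \<partial>\<mu>) 0 < e/2"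
      using lim0 half unfolding tendsto_iff by blast
    then obtain m where m: "(\<integral>z. cut (real m) z \<partial>\<mu>) < e/2"
      unfolding eventually_sequentially dist_real_def by (metis abs_less_iff diff_zero order_refl)
    have "(\<lambda>n. (\<Sum>i<n. cut (real m) (Z n i)) / real n) \<longlonglongrightarrow> (\<integral>z. cut (real m) z \<partial>\<mu>)"
      using W ccut[of "real m"] bcut unfolding empirical_weak_conv_def bounded_iff by blast
    then have "\<forall>\<^sub>F n in sequentially. dist ((\<Sum>i<n. cut (real m) (Z n i)) / real n) (\<integral>z. cut (real m) z \<partial>\<mu>) < e/2"
      using half unfolding tendsto_iff by blast
    then have "\<forall>\<^sub>F n in sequentially. (\<Sum>i<n. cut (real m) (Z n i)) / real n < e"
    proof (rule eventually_mono)
      fix n :: nat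
      assume "dist ((\<Sum>i<n. cut (real m) (Z n i)) / real n) (\<integral>z. cut (real m) z \<partial>\<mu>) < e/2"
      then have "(\<Sum>i<n. cut (real m) (Z n i)) / real n - (\<integral>z. cut (real m) z \<partial>\<mu>) < e/2"
        unfolding dist_real_def by linarith
      then show "(\<Sum>i<n. cut (real m) (Z n i)) / real n < e" using m by linarith
    qed
    then show ?thesis by (intro exI[of _ "real m"]) auto
  qed
  have cH: "continuous_on UNIV H"
    unfolding continuous_on_iff
  proof (intro ballI allI impI)
    fix x :: "real^'s" and e :: real assume "e > 0"
    then obtain d where d: "d > 0" and hd: "\<And>y y0 v. dist y y0 < d \<Longrightarrow> norm (h (y - v) - h (y0 - v)) < e/2"
      using equi[of "e/2"] by auto
    show "\<exists>d>0. \<forall>x'\<in>UNIV. dist x' x < d \<longrightarrow> dist (H x') (H x) < e"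
    proof (intro exI[of _ d] conjI ballI impI)
      fix x' :: "real^'s" assume "dist x' x < d"
      then have "norm (H x' - H x) \<le> e/2" using H_equi[of x' x "e/2"] hd by auto
      then show "dist (H x') (H x) < e" using \<open>e > 0\<close> by (simp add: dist_norm)
    qed (use d in auto)
  qed
  define G where "G z = \<alpha> z *\<^sub>R H (snd z)" for z
  have cG: "continuous_on UNIV G"
    unfolding G_def by (intro continuous_intros continuous_on_compose2[OF cH] c\<alpha>) auto
  have bG: "norm (G z) \<le> A * B" for z
    unfolding G_def using b\<alpha>[of z] Hb[of "snd z"] A0 B0 by (simp add: mult_mono)
  have step1: "(\<lambda>n. (1 / real n) *\<^sub>R (\<Sum>i<n. G (Z n i))) \<longlonglongrightarrow> (\<integral>z. G z \<partial>\<mu>)"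
    by (rule weak_vec[OF W P S cG bG])
  have rhs: "(\<integral>z. (\<integral>z'. \<alpha> z *\<^sub>R h (snd z - snd z') \<partial>\<mu>) \<partial>\<mu>) = (\<integral>z. G z \<partial>\<mu>)"
    by (simp add: G_def H_def)
  define D where "D n = (1 / real n) *\<^sub>R (\<Sum>i<n. \<alpha> (Z n i) *\<^sub>R (Hn n (snd (Z n i)) - H (snd (Z n i))))" for n
  have lhs: "(1 / (real n)\<^sup>2) *\<^sub>R (\<Sum>i<n. \<Sum>j<n. \<alpha> (Z n i) *\<^sub>R h (snd (Z n i) - snd (Z n j)))
      = (1 / real n) *\<^sub>R (\<Sum>i<n. G (Z n i)) + D n" for n
  proof -
    have "(1 / (real n)\<^sup>2) *\<^sub>R (\<Sum>i<n. \<Sum>j<n. \<alpha> (Z n i) *\<^sub>R h (snd (Z n i) - snd (Z n j)))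
       = (1 / real n) *\<^sub>R ((1 / real n) *\<^sub>R (\<Sum>i<n. \<alpha> (Z n i) *\<^sub>R (\<Sum>j<n. h (snd (Z n i) - snd (Z n j)))))"
      by (simp add: scaleR_sum_right power2_eq_square)
    also have "(1 / real n) *\<^sub>R (\<Sum>i<n. \<alpha> (Z n i) *\<^sub>R (\<Sum>j<n. h (snd (Z n i) - snd (Z n j))))
       = (\<Sum>i<n. \<alpha> (Z n i) *\<^sub>R Hn n (snd (Z n i)))"
      by (simp add: Hn_def scaleR_sum_right)
    also have "(\<Sum>i<n. \<alpha> (Z n i) *\<^sub>R Hn n (snd (Z n i)))
       = (\<Sum>i<n. G (Z n i)) + (\<Sum>i<n. \<alpha> (Z n i) *\<^sub>R (Hn n (snd (Z n i)) - H (snd (Z n i))))"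
      by (simp add: G_def sum.distrib[symmetric] scaleR_diff_right)
    finally show ?thesis by (simp add: D_def scaleR_add_right)
  qed
  have D0: "D \<longlonglongrightarrow> 0"
    unfolding tendsto_iff
  proof (intro allI impI)
    fix e :: real assume e: "e > 0"
    define \<epsilon> where "\<epsilon> = e / (A * (1 + 2 * B) + 1)"
    have den: "A * (1 + 2 * B) + 1 > 0" using mult_nonneg_nonneg[of A "1 + 2 * B"] A0 B0 by linarith
    have \<epsilon>0: "\<epsilon> > 0" unfolding \<epsilon>_def using e den by simp
    have \<epsilon>e: "A * (1 + 2 * B) * \<epsilon> < e"
    proof -
      have "\<epsilon> * (A * (1 + 2 * B) + 1) = e" unfolding \<epsilon>_def using den by simp
      then show ?thesis using \<epsilon>0 by (simp add: algebra_simps)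
    qed
    obtain R where R0: "R \<ge> 0" and evR: "\<forall>\<^sub>F n in sequentially. (\<Sum>i<n. cut R (Z n i)) / real n < \<epsilon>"
      using tight[OF \<epsilon>0] by auto
    have evU: "\<forall>\<^sub>F n in sequentially. \<forall>y\<in>cball 0 (R+1). norm (Hn n y - H y) \<le> \<epsilon>"
      by (rule unif[OF \<epsilon>0])
    have ev: "\<forall>\<^sub>F n in sequentially. n > 0 \<and> (\<Sum>i<n. cut R (Z n i)) / real n < \<epsilon>
        \<and> (\<forall>y\<in>cball 0 (R+1). norm (Hn n y - H y) \<le> \<epsilon>)"
      using eventually_conj[OF eventually_gt_at_top[of 0] eventually_conj[OF evR evU]] by simp
    show "\<forall>\<^sub>F n in sequentially. dist (D n) 0 < e"
    proof (rule eventually_mono[OF ev])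
      fix n :: nat assume asm: "n > 0 \<and> (\<Sum>i<n. cut R (Z n i)) / real n < \<epsilon>
        \<and> (\<forall>y\<in>cball 0 (R+1). norm (Hn n y - H y) \<le> \<epsilon>)"
      then have n0: "n > 0" and cs: "(\<Sum>i<n. cut R (Z n i)) / real n < \<epsilon>"
        and un: "\<And>y. y \<in> cball 0 (R+1) \<Longrightarrow> norm (Hn n y - H y) \<le> \<epsilon>" by auto
      have cut0: "cut R z \<ge> 0" for z by (simp add: cut_def)
      have pt: "norm (Hn n (snd z) - H (snd z)) \<le> \<epsilon> + 2 * B * cut R z" for z
      proof (cases "norm (snd z) \<le> R + 1")
        case True
        then have "norm (Hn n (snd z) - H (snd z)) \<le> \<epsilon>" using un by simp
        then show ?thesis using B0 cut0[of z] by (simp add: add_increasing2)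
      next
        case False
        then have "cut R z = 1" by (simp add: cut_def)
        moreover have "norm (Hn n (snd z) - H (snd z)) \<le> 2 * B"
          using norm_triangle_ineq4[of "Hn n (snd z)" "H (snd z)"] Hnb[of n "snd z"] Hb[of "snd z"] by linarith
        ultimately show ?thesis using \<epsilon>0 by simp
      qed
      let ?d = "\<lambda>i. Hn n (snd (Z n i)) - H (snd (Z n i))"
      have "norm (\<Sum>i<n. \<alpha> (Z n i) *\<^sub>R ?d i) \<le> (\<Sum>i<n. norm (\<alpha> (Z n i) *\<^sub>R ?d i))"
        by (rule norm_sum)
      also have "\<dots> \<le> (\<Sum>i<n. A * (\<epsilon> + 2 * B * cut R (Z n i)))"
      proof (rule sum_mono)
        fix i assume "i \<in> {..<n}"
        show "norm (\<alpha> (Z n i) *\<^sub>R ?d i) \<le> A * (\<epsilon> + 2 * B * cut R (Z n i))"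
          using mult_mono[OF b\<alpha>[of "Z n i"] pt[of "Z n i"] A0 norm_ge_zero] by simp
      qed
      also have "\<dots> = A * \<epsilon> * real n + 2 * A * B * (\<Sum>i<n. cut R (Z n i))"
        by (simp add: sum.distrib sum_distrib_left algebra_simps)
      finally have nS: "norm (\<Sum>i<n. \<alpha> (Z n i) *\<^sub>R ?d i) \<le> A * \<epsilon> * real n + 2 * A * B * (\<Sum>i<n. cut R (Z n i))" .
      have "norm (D n) = norm (\<Sum>i<n. \<alpha> (Z n i) *\<^sub>R ?d i) / real n"
        unfolding D_def by simp
      also have "\<dots> \<le> (A * \<epsilon> * real n + 2 * A * B * (\<Sum>i<n. cut R (Z n i))) / real n"
        using nS n0 by (simp add: divide_right_mono)
      also have "\<dots> = A * \<epsilon> + 2 * A * B * ((\<Sum>i<n. cut R (Z n i)) / real n)"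
        using n0 by (simp add: field_simps)
      also have "\<dots> \<le> A * \<epsilon> + 2 * A * B * \<epsilon>"
        using mult_left_mono[OF less_imp_le[OF cs], of "2 * A * B"] A0 B0 by simp
      also have "\<dots> < e" using \<epsilon>e by (simp add: algebra_simps)
      finally show "dist (D n) 0 < e" by simp
    qed
  qed
  have "(\<lambda>n. (1 / real n) *\<^sub>R (\<Sum>i<n. G (Z n i)) + D n) \<longlonglongrightarrow> (\<integral>z. G z \<partial>\<mu>) + 0"
    by (rule tendsto_add[OF step1 D0])
  then show ?thesis unfolding lhs rhs by simp
qed

theorem lemmaA3:
  fixes M :: "'w measure"
    and Xr :: "nat \<Rightarrow> 'w \<Rightarrow> real^'d"
    and \<mu>X :: "(real^'d) measure"
    and \<omega> :: 'w
    and \<rho> :: real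
    and \<sigma> :: "nat \<Rightarrow> nat \<Rightarrow> real"
    and Y :: "nat \<Rightarrow> nat \<Rightarrow> real^'s"
    and \<mu> :: "((real^'d) \<times> (real^'s)) measure"
    and \<alpha> :: "(real^'d) \<times> (real^'s) \<Rightarrow> real"
  assumes "CARD('d) \<ge> 2" and "CARD('s) \<ge> 2"
    and "0 < \<rho>" and "\<rho> < 1"
    and "prob_space M"
    and "prob_space.indep_vars M (\<lambda>_. borel) Xr UNIV"
    and "\<And>i. distr M borel (Xr i) = \<mu>X"
    and "admissible_input_law \<mu>X"
    and "\<omega> \<in> space M"
    and "\<forall>\<^sub>F n in sequentially. tsne_output (\<lambda>i. Xr i \<omega>) n \<rho> (\<sigma> n) (Y n)"
    and "prob_space \<mu>" and "sets \<mu> = sets borel"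
    and "empirical_weak_conv (\<lambda>n i. (Xr i \<omega>, Y n i)) \<mu>"
    and "continuous_on UNIV \<alpha>" and "bounded (range \<alpha>)"
  shows "(\<lambda>n. (1 / (real n)\<^sup>2) *\<^sub>R
            (\<Sum>i<n. \<Sum>j<n. \<alpha> (Xr i \<omega>, Y n i) *\<^sub>R force_kernel \<mu> (Y n i) (Y n j)))
         \<longlonglongrightarrow> (\<integral>z. (\<integral>z'. \<alpha> z *\<^sub>R force_kernel \<mu> (snd z) (snd z') \<partial>\<mu>) \<partial>\<mu>)"
proof -
  define Dn where "Dn = (\<integral>z. (\<integral>z'. 1 / (1 + (norm (snd z - snd z'))\<^sup>2) \<partial>\<mu>) \<partial>\<mu>)"
  define c where "c = 1 / Dn"
  define h :: "real^'s \<Rightarrow> real^'s" where "h v = (c / ((1 + (norm v)\<^sup>2) * (1 + (norm v)\<^sup>2))) *\<^sub>R v" for v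
  have fk: "force_kernel \<mu> y y' = h (y - y')" for y y'
    by (simp add: force_kernel_def q_lim_def h_def c_def Dn_def[symmetric])
  have pos: "(1 + (norm v)\<^sup>2) * (1 + (norm v)\<^sup>2) > 0" for v :: "real^'s"
    by (simp add: add_pos_nonneg)
  have ch: "continuous_on UNIV h"
  proof -
    have nz: "1 + (norm v)\<^sup>2 \<noteq> 0" for v :: "real^'s"
      using add_pos_nonneg[OF zero_less_one zero_le_power2[of "norm v"]] by linarith
    show ?thesis unfolding h_def using nz by (intro continuous_intros) auto
  qed
  have key: "t / ((1 + t\<^sup>2) * (1 + t\<^sup>2)) \<le> 1 / (1 + t)" if t: "t \<ge> 0" for t :: real
  proof -
    have "t * (1 + t) \<le> (1 + t\<^sup>2) * (1 + t\<^sup>2)"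
    proof -
      have "t \<le> 1 + t\<^sup>2 + t^4"
      proof (cases "t \<le> 1")
        case True then show ?thesis using t by (simp add: add_increasing2)
      next
        case False then have "t \<le> t\<^sup>2" by (simp add: power2_eq_square)
        moreover have "t^4 \<ge> 0" using t by simp
        ultimately show ?thesis by linarith
      qed
      then show ?thesis by (simp add: power2_eq_square algebra_simps power4_eq_xxxx)
    qed
    then show ?thesis using t by (simp add: divide_simps add_pos_nonneg)
  qed
  have bh1: "norm (h v) \<le> \<bar>c\<bar> / (1 + norm v)" for v
  proof -
    have "norm (h v) = \<bar>c\<bar> * (norm v / ((1 + (norm v)\<^sup>2) * (1 + (norm v)\<^sup>2)))"
      unfolding h_def using pos[of v] by (simp add: abs_divide abs_mult)
    also have "\<dots> \<le> \<bar>c\<bar> * (1 / (1 + norm v))"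
      by (rule mult_left_mono[OF key]) auto
    finally show ?thesis by simp
  qed
  have bh2: "norm (h v) \<le> \<bar>c\<bar>" for v
  proof -
    have "\<bar>c\<bar> / (1 + norm v) \<le> \<bar>c\<bar>"
    proof -
      have "1 \<le> 1 + norm v" by simp
      then have "\<bar>c\<bar> / (1 + norm v) \<le> \<bar>c\<bar> / 1"
        by (intro divide_left_mono) (auto simp: add_pos_nonneg)
      then show ?thesis by simp
    qed
    then show ?thesis using bh1[of v] by linarith
  qed
  have uch: "uniformly_continuous_on UNIV h" by (rule uc_vanish[OF ch bh1])
  obtain A where bA: "\<And>z. \<bar>\<alpha> z\<bar> \<le> A"
    using assms(15) unfolding bounded_iff by auto
  have W: "empirical_weak_conv (\<lambda>n i. (Xr i \<omega>, Y n i)) \<mu>" by fact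
  show ?thesis
    using product_conv[OF W assms(11) assms(12) assms(14) bA uch bh2] by (simp add: fk)
qed

end
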